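(* For every sequent $\Gamma$ and every formula $A$ of MRL, the sequent $\Gamma, \mathcal{R}{:}A$ (where $\mathcal{R}$ is the full set of roles) is derivable in MRL.
   Context: Fix a nonempty set $\mathcal{R}$ (the set of roles). For $R\subseteq\mathcal{R}$ write $\overline{R}=\mathcal{R}\setminus R$. An ultrafilter $\mathcal{U}$ on $\mathcal{R}$ is a set of subsets of $\mathcal{R}$ such that $\mathcal{R}\in\mathcal{U}$; $R_1\in\mathcal{U}$ and $R_1\subseteq R_2$ imply $R_2\in\mathcal{U}$; $R_1,R_2\in\mathcal{U}$ imply $R_1\cap R_2\in\mathcal{U}$; and for every $R\subseteq\mathcal{R}$, $R\in\mathcal{U}$ or $\overline{R}\in\mathcal{U}$. An endomorphism is any function $f:\mathcal{R}\to\mathcal{R}$, and $f^{-1}(R)$ denotes the preimage of $R$. Fix a first-order language of terms $t$ with variables $x$, and a collection of primitive (atomic) formulas $a$ (which may contain terms). Formulas of MRL: $A ::= a \mid \neg_f(A) \mid A_1\wedge_{\mathcal{U}} A_2 \mid A\supset_{f,\mathcal{U}} B \mid \forall_{\mathcal{U}}(\lambda x.A)$, with $f$ an endomorphism and $\mathcal{U}$ an ultrafilter on $\mathcal{R}$; $x$ is bound in $\forall_{\mathcal{U}}(\lambda x.A)$, and $A[t/x]$ is capture-avoiding substitution. An i-formula is a pair $R{:}A$ with $R\subseteq\mathcal{R}$ and $A$ a formula; a sequent is a finite multiset of i-formulas, and comma denotes multiset union. Derivability in MRL is given by the rules (premises $\Rightarrow$ conclusion, $\Gamma,\Gamma_1,\Gamma_2$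 arbitrary sequents): (Id) $\Gamma, R_1{:}a,\ldots,R_n{:}a$ is derivable whenever $n\ge1$ and $R_1,\ldots,R_n$ are pairwise disjoint with union $\mathcal{R}$; (Weaken) $\Gamma,R{:}A,R{:}A \Rightarrow \Gamma,R{:}A$; ($\neg$) $\Gamma, f^{-1}(R){:}A \Rightarrow \Gamma, R{:}\neg_f(A)$; ($\wedge$-neg-l) if $R\notin\mathcal{U}$: $\Gamma,R{:}A\Rightarrow\Gamma,R{:}A\wedge_{\mathcal{U}}B$; ($\wedge$-neg-r) if $R\notin\mathcal{U}$: $\Gamma,R{:}B\Rightarrow\Gamma,R{:}A\wedge_{\mathcal{U}}B$; ($\wedge$-pos) if $R\in\mathcal{U}$: $(\Gamma,R{:}A;\ \Gamma,R{:}B)\Rightarrow\Gamma,R{:}A\wedge_{\mathcal{U}}B$; ($\supset$-neg) if $R\notin\mathcal{U}$: $\Gamma,f^{-1}(R){:}A,R{:}B\Rightarrow\Gamma,R{:}A\supset_{f,\mathcal{U}}B$; ($\supset$-pos) if $R\in\mathcal{U}$: $(\Gamma_1,f^{-1}(R){:}A;\ \Gamma_2,R{:}B)\Rightarrow\Gamma_1,\Gamma_2,R{:}A\supset_{f,\mathcal{U}}B$; ($\forall$-neg) if $R\notin\mathcal{U}$ and $t$ is a term: $\Gamma,R{:}A[t/x]\Rightarrow\Gamma,R{:}\forall_{\mathcal{U}}(\lambda x.A)$; ($\forall$-pos) if $R\in\mathcal{U}$ and $x$ has no free occurrence in $\Gamma$: $\Gamma,R{:}A\Rightarrow\Gamma,R{:}\forall_{\mathcal{U}}(\lambda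 x.A)$. A sequent is derivable in MRL if it is the conclusion of a finite derivation tree built from these rules. *)

theory Defs
  imports Main "HOL-Library.Multiset"
begin

text \<open>The set of roles is the (nonempty) type 'r; the full set of roles is UNIV.
  Ultrafilters are defined exactly as in the paper (no requirement that the
  empty set is excluded).\<close>

definition is_ultrafilter :: "'r set set \<Rightarrow> bool" where
  "is_ultrafilter U \<longleftrightarrow>
     UNIV \<in> U \<and>
     (\<forall>R1 R2. R1 \<in> U \<and> R1 \<subseteq> R2 \<longrightarrow> R2 \<in> U) \<and>
     (\<forall>R1 R2. R1 \<in> U \<and> R2 \<in> U \<longrightarrow> R1 \<inter> R2 \<in> U) \<and>
     (\<forall>R. R \<in> U \<or> - R \<in> U)"

typedef 'r ultrafilter = "{U :: 'r set set. is_ultrafilter U}"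
  by (rule exI[of _ UNIV]) (simp add: is_ultrafilter_def)

definition in_uf :: "'r set \<Rightarrow> 'r ultrafilter \<Rightarrow> bool" where
  "in_uf R U \<longleftrightarrow> R \<in> Rep_ultrafilter U"

section \<open>Syntax (locally nameless: free variables FVar, bound variables BVar as de Bruijn indices)\<close>

datatype 'f trm = FVar nat | BVar nat | Fn 'f "'f trm list"

datatype ('r, 'f, 'p) fm =
    Atom 'p "'f trm list"
  | Neg "'r \<Rightarrow> 'r" "('r, 'f, 'p) fm"
  | Conj "'r ultrafilter" "('r, 'f, 'p) fm" "('r, 'f, 'p) fm"
  | Imp "'r \<Rightarrow> 'r" "'r ultrafilter" "('r, 'f, 'p) fm" "('r, 'f, 'p) fm"
  | Forall "'r ultrafilter" "('r, 'f, 'p) fm"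

type_synonym ('r, 'f, 'p) sequent = "('r set \<times> ('r, 'f, 'p) fm) multiset"

fun open_trm :: "nat \<Rightarrow> 'f trm \<Rightarrow> 'f trm \<Rightarrow> 'f trm" where
  "open_trm k s (FVar x) = FVar x"
| "open_trm k s (BVar i) = (if i = k then s else BVar i)"
| "open_trm k s (Fn f ts) = Fn f (map (open_trm k s) ts)"

fun open_fm :: "nat \<Rightarrow> 'f trm \<Rightarrow> ('r, 'f, 'p) fm \<Rightarrow> ('r, 'f, 'p) fm" where
  "open_fm k s (Atom p ts) = Atom p (map (open_trm k s) ts)"
| "open_fm k s (Neg f A) = Neg f (open_fm k s A)"
| "open_fm k s (Conj U A B) = Conj U (open_fm k s A) (open_fm k s B)"
| "open_fm k s (Imp f U A B) = Imp f U (open_fm k s A) (open_fm k s B)"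
| "open_fm k s (Forall U A) = Forall U (open_fm (Suc k) s A)"

fun fv_trm :: "'f trm \<Rightarrow> nat set" where
  "fv_trm (FVar x) = {x}"
| "fv_trm (BVar i) = {}"
| "fv_trm (Fn f ts) = (\<Union>t\<in>set ts. fv_trm t)"

fun fv_fm :: "('r, 'f, 'p) fm \<Rightarrow> nat set" where
  "fv_fm (Atom p ts) = (\<Union>t\<in>set ts. fv_trm t)"
| "fv_fm (Neg f A) = fv_fm A"
| "fv_fm (Conj U A B) = fv_fm A \<union> fv_fm B"
| "fv_fm (Imp f U A B) = fv_fm A \<union> fv_fm B"
| "fv_fm (Forall U A) = fv_fm A"

definition fv_seq :: "('r, 'f, 'p) sequent \<Rightarrow> nat set" where
  "fv_seq \<Gamma> = (\<Union>RA\<in>set_mset \<Gamma>. fv_fm (snd RA))"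

fun lc_trm_at :: "nat \<Rightarrow> 'f trm \<Rightarrow> bool" where
  "lc_trm_at k (FVar x) = True"
| "lc_trm_at k (BVar i) = (i < k)"
| "lc_trm_at k (Fn f ts) = (\<forall>t\<in>set ts. lc_trm_at k t)"

fun lc_fm_at :: "nat \<Rightarrow> ('r, 'f, 'p) fm \<Rightarrow> bool" where
  "lc_fm_at k (Atom p ts) = (\<forall>t\<in>set ts. lc_trm_at k t)"
| "lc_fm_at k (Neg f A) = lc_fm_at k A"
| "lc_fm_at k (Conj U A B) = (lc_fm_at k A \<and> lc_fm_at k B)"
| "lc_fm_at k (Imp f U A B) = (lc_fm_at k A \<and> lc_fm_at k B)"
| "lc_fm_at k (Forall U A) = lc_fm_at (Suc k) A"

abbreviation lc_trm :: "'f trm \<Rightarrow> bool" where "lc_trm \<equiv> lc_trm_at 0"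
abbreviation lc_fm :: "('r, 'f, 'p) fm \<Rightarrow> bool" where "lc_fm \<equiv> lc_fm_at 0"

inductive derivable :: "('r, 'f, 'p) sequent \<Rightarrow> bool" where
  Id: "\<lbrakk> Rs \<noteq> [];
         \<forall>i<length Rs. \<forall>j<length Rs. i \<noteq> j \<longrightarrow> Rs ! i \<inter> Rs ! j = {};
         \<Union>(set Rs) = UNIV \<rbrakk>
       \<Longrightarrow> derivable (\<Gamma> + mset (map (\<lambda>R. (R, Atom p ts)) Rs))"
| Weaken: "derivable (\<Gamma> + {#(R, A), (R, A)#}) \<Longrightarrow> derivable (\<Gamma> + {#(R, A)#})"
| NegR: "derivable (\<Gamma> + {#(f -` R, A)#}) \<Longrightarrow> derivable (\<Gamma> + {#(R, Neg f A)#})"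
| ConjNegL: "\<lbrakk> \<not> in_uf R U; derivable (\<Gamma> + {#(R, A)#}) \<rbrakk>
             \<Longrightarrow> derivable (\<Gamma> + {#(R, Conj U A B)#})"
| ConjNegR: "\<lbrakk> \<not> in_uf R U; derivable (\<Gamma> + {#(R, B)#}) \<rbrakk>
             \<Longrightarrow> derivable (\<Gamma> + {#(R, Conj U A B)#})"
| ConjPos: "\<lbrakk> in_uf R U; derivable (\<Gamma> + {#(R, A)#}); derivable (\<Gamma> + {#(R, B)#}) \<rbrakk>
             \<Longrightarrow> derivable (\<Gamma> + {#(R, Conj U A B)#})"
| ImpNeg: "\<lbrakk> \<not> in_uf R U; derivable (\<Gamma> + {#(f -` R, A), (R, B)#}) \<rbrakk>
             \<Longrightarrow> derivable (\<Gamma> + {#(R, Imp f U A B)#})"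
| ImpPos: "\<lbrakk> in_uf R U; derivable (\<Gamma>1 + {#(f -` R, A)#}); derivable (\<Gamma>2 + {#(R, B)#}) \<rbrakk>
             \<Longrightarrow> derivable (\<Gamma>1 + \<Gamma>2 + {#(R, Imp f U A B)#})"
| ForallNeg: "\<lbrakk> \<not> in_uf R U; lc_trm t; derivable (\<Gamma> + {#(R, open_fm 0 t A)#}) \<rbrakk>
             \<Longrightarrow> derivable (\<Gamma> + {#(R, Forall U A)#})"
| ForallPos: "\<lbrakk> in_uf R U; x \<notin> fv_seq \<Gamma>; x \<notin> fv_fm A;
                derivable (\<Gamma> + {#(R, open_fm 0 (FVar x) A)#}) \<rbrakk>
             \<Longrightarrow> derivable (\<Gamma> + {#(R, Forall U A)#})"

end

theory Submission
  imports Defs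
begin

fun fsz :: "('r, 'f, 'p) fm \<Rightarrow> nat" where
  "fsz (Atom p ts) = 0"
| "fsz (Neg f A) = Suc (fsz A)"
| "fsz (Conj U A B) = Suc (fsz A + fsz B)"
| "fsz (Imp f U A B) = Suc (fsz A + fsz B)"
| "fsz (Forall U A) = Suc (fsz A)"

lemma fsz_open_fm[simp]: "fsz (open_fm k s A) = fsz A"
  by (induction A arbitrary: k) auto

lemma lc_open_trm: "lc_trm_at (Suc k) t \<Longrightarrow> lc_trm_at k (open_trm k (FVar x) t)"
  by (induction t) auto

lemma lc_open_fm: "lc_fm_at (Suc k) A \<Longrightarrow> lc_fm_at k (open_fm k (FVar x) A)"
  by (induction A arbitrary: k) (auto simp: lc_open_trm)

lemma fin_fv_trm: "finite (fv_trm t)"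
  by (induction t) auto

lemma fin_fv_fm: "finite (fv_fm A)"
  by (induction A) (auto simp: fin_fv_trm)

lemma fin_fv_seq: "finite (fv_seq \<Gamma>)"
  by (auto simp: fv_seq_def fin_fv_fm)

lemma uf_univ: "in_uf UNIV U"
  using Rep_ultrafilter[of U] by (simp add: in_uf_def is_ultrafilter_def)

lemma main_aux: "lc_fm A \<Longrightarrow> derivable (\<Gamma> + {#(UNIV, A)#})"
proof (induction A arbitrary: \<Gamma> rule: measure_induct_rule[of fsz])
  case (less A)
  show ?case
  proof (cases A)
    case (Atom p ts)
    have "derivable (\<Gamma> + mset (map (\<lambda>R. (R, Atom p ts)) [UNIV]))"
      by (rule derivable.Id) auto
    then show ?thesis using Atom by simp
  next
    case (Neg f B)
    have "derivable (\<Gamma> + {#(f -` UNIV, B)#})" using less Neg by simp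
    then show ?thesis using Neg derivable.NegR by blast
  next
    case (Conj U B C)
    have 1: "derivable (\<Gamma> + {#(UNIV, B)#})" using less Conj by simp
    have 2: "derivable (\<Gamma> + {#(UNIV, C)#})" using less Conj by simp
    show ?thesis using Conj derivable.ConjPos[OF uf_univ 1 2] by simp
  next
    case (Imp f U B C)
    have 1: "derivable (\<Gamma> + {#(f -` UNIV, B)#})" using less Imp by simp
    have 2: "derivable ({#} + {#(UNIV, C)#})" using less Imp by simp
    have "derivable (\<Gamma> + {#} + {#(UNIV, Imp f U B C)#})"
      by (rule derivable.ImpPos[OF uf_univ 1 2])
    then show ?thesis using Imp by simp
  next
    case (Forall U B)
    have "finite (fv_seq \<Gamma> \<union> fv_fm B)" by (simp add: fin_fv_seq fin_fv_fm)
    then obtain x where x: "x \<notin> fv_seq \<Gamma> \<union> fv_fm B"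
      using infinite_UNIV_nat ex_new_if_finite by blast
    have "lc_fm (open_fm 0 (FVar x) B)" using less Forall lc_open_fm by simp
    then have "derivable (\<Gamma> + {#(UNIV, open_fm 0 (FVar x) B)#})"
      using less Forall by simp
    moreover have "x \<notin> fv_seq \<Gamma>" "x \<notin> fv_fm B" using x by auto
    ultimately show ?thesis using Forall derivable.ForallPos[OF uf_univ] by simp
  qed
qed

theorem mainTheorem2:
  fixes \<Gamma> :: "('r, 'f, 'p) sequent" and A :: "('r, 'f, 'p) fm"
  assumes "lc_fm A"
    and "\<forall>RB\<in>#\<Gamma>. lc_fm (snd RB)"
  shows "derivable (\<Gamma> + {#(UNIV, A)#})"
  using assms(1) by (rule main_aux)

end
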